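(* $\displaystyle \liminf_{n\to\infty}\frac{p(n,3)}{s(n,3)} > 1.$
   Context: $p(n,3)$ denotes the number of paving matroids of rank $3$ on the ground set $[n]=\{1,\dots,n\}$ (rank-$3$ matroids all of whose circuits have at least $3$ elements), and $s(n,3)$ denotes the number of sparse paving matroids of rank $3$ on $[n]$ (rank-$3$ matroids in which every $3$-subset of $[n]$ is either a basis or a circuit-hyperplane). *)

theory Defs
  imports Complex_Main "HOL-Library.Extended_Real" "HOL-Library.Liminf_Limsup"
begin

text \<open>A matroid on a finite ground set E is represented by its set of bases \<B>.\<close>
definition matroid_bases :: "'a set \<Rightarrow> 'a set set \<Rightarrow> bool" where
  "matroid_bases E \<B> \<longleftrightarrow> \<B> \<noteq> {} \<and> (\<forall>B\<in>\<B>. B \<subseteq> E) \<and>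
     (\<forall>B1\<in>\<B>. \<forall>B2\<in>\<B>. \<forall>x\<in>B1 - B2. \<exists>y\<in>B2 - B1. insert y (B1 - {x}) \<in> \<B>)"

definition indep :: "'a set set \<Rightarrow> 'a set \<Rightarrow> bool" where
  "indep \<B> X \<longleftrightarrow> (\<exists>B\<in>\<B>. X \<subseteq> B)"

definition circuit :: "'a set \<Rightarrow> 'a set set \<Rightarrow> 'a set \<Rightarrow> bool" where
  "circuit E \<B> C \<longleftrightarrow> C \<subseteq> E \<and> \<not> indep \<B> C \<and> (\<forall>D. D \<subset> C \<longrightarrow> indep \<B> D)"

definition mrank :: "'a set set \<Rightarrow> 'a set \<Rightarrow> nat" where
  "mrank \<B> X = Max {card I | I. I \<subseteq> X \<and> indep \<B> I}"

definition has_rank :: "'a set set \<Rightarrow> nat \<Rightarrow> bool" where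
  "has_rank \<B> r \<longleftrightarrow> (\<forall>B\<in>\<B>. card B = r)"

definition hyperplane :: "'a set \<Rightarrow> 'a set set \<Rightarrow> nat \<Rightarrow> 'a set \<Rightarrow> bool" where
  "hyperplane E \<B> r H \<longleftrightarrow> H \<subseteq> E \<and> mrank \<B> H = r - 1 \<and>
     (\<forall>e\<in>E - H. mrank \<B> (insert e H) > mrank \<B> H)"

definition paving :: "'a set \<Rightarrow> 'a set set \<Rightarrow> nat \<Rightarrow> bool" where
  "paving E \<B> r \<longleftrightarrow> (\<forall>C. circuit E \<B> C \<longrightarrow> card C \<ge> r)"

definition sparse_paving :: "'a set \<Rightarrow> 'a set set \<Rightarrow> nat \<Rightarrow> bool" where
  "sparse_paving E \<B> r \<longleftrightarrow> (\<forall>X. X \<subseteq> E \<and> card X = r \<longrightarrow>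
      X \<in> \<B> \<or> (circuit E \<B> X \<and> hyperplane E \<B> r X))"

definition p_count :: "nat \<Rightarrow> nat \<Rightarrow> nat" where
  "p_count n r = card {\<B>. matroid_bases {1..n} \<B> \<and> has_rank \<B> r \<and> paving {1..n} \<B> r}"

definition s_count :: "nat \<Rightarrow> nat \<Rightarrow> nat" where
  "s_count n r = card {\<B>. matroid_bases {1..n} \<B> \<and> has_rank \<B> r \<and> sparse_paving {1..n} \<B> r}"

end

theory Submission
  imports Defs
begin


lemma card_filter_sum: "finite B \<Longrightarrow> card {b\<in>B. P b} = (\<Sum>b\<in>B. if P b then 1 else 0::nat)"
  by (simp add: sum.If_cases Int_def)

lemma double_count:
  assumes "finite A" "finite B"
  shows "(\<Sum>a\<in>A. card {b\<in>B. R a b}) = (\<Sum>b\<in>B. card {a\<in>A. R a b})"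
  using assms by (simp add: card_filter_sum sum.swap[of _ A B])

lemma double_count_le:
  assumes "finite A" "finite B"
    and "\<And>a. a \<in> A \<Longrightarrow> f a \<le> card {b\<in>B. R a b}"
    and "\<And>b. b \<in> B \<Longrightarrow> card {a\<in>A. R a b} \<le> d"
  shows "(\<Sum>a\<in>A. f a) \<le> card B * d"
proof -
  have "(\<Sum>a\<in>A. f a) \<le> (\<Sum>a\<in>A. card {b\<in>B. R a b})" by (rule sum_mono) (use assms in auto)
  also have "\<dots> = (\<Sum>b\<in>B. card {a\<in>A. R a b})" using double_count assms by blast
  also have "\<dots> \<le> (\<Sum>b\<in>B. d)" by (rule sum_mono) (use assms in auto)
  finally show ?thesis by simp
qed



definition T3 :: "nat \<Rightarrow> nat set set" where "T3 n = {X. X \<subseteq> {1..n} \<and> card X = 3}"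
definition lin :: "nat set set \<Rightarrow> bool" where
  "lin H \<longleftrightarrow> (\<forall>X\<in>H. \<forall>Y\<in>H. X \<noteq> Y \<longrightarrow> card (X \<inter> Y) \<le> 1)"
definition linefam :: "nat \<Rightarrow> nat set set \<Rightarrow> bool" where
  "linefam n Ls \<longleftrightarrow> (\<forall>l\<in>Ls. l \<subseteq> {1..n} \<and> 3 \<le> card l \<and> card l \<le> 4) \<and> lin Ls"
definition bas :: "nat \<Rightarrow> nat set set \<Rightarrow> nat set set" where
  "bas n Ls = {B. B \<subseteq> {1..n} \<and> card B = 3 \<and> (\<forall>l\<in>Ls. \<not> B \<subseteq> l)}"

lemma linD: "lin H \<Longrightarrow> X \<in> H \<Longrightarrow> Y \<in> H \<Longrightarrow> X \<noteq> Y \<Longrightarrow> card (X \<inter> Y) \<le> 1"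
  unfolding lin_def by simp

lemma uniq_line:
  assumes "linefam n Ls" "l1 \<in> Ls" "l2 \<in> Ls" "P \<subseteq> l1" "P \<subseteq> l2" "2 \<le> card P"
  shows "l1 = l2"
proof (rule ccontr)
  assume ne: "l1 \<noteq> l2"
  have "finite l1" using assms(1,2) unfolding linefam_def by (meson finite_subset finite_atLeastAtMost)
  hence "card P \<le> card (l1 \<inter> l2)" using assms(4,5) by (intro card_mono) auto
  moreover have "card (l1 \<inter> l2) \<le> 1" using assms(1,2,3) ne unfolding linefam_def lin_def by blast
  ultimately show False using assms(6) by linarith
qed

lemma extend_pair:
  assumes lf: "linefam n Ls" and n: "5 \<le> n" and P: "P \<subseteq> {1..n}" "card P = 2"
  shows "\<exists>c. c \<notin> P \<and> insert c P \<in> bas n Ls"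
proof (rule ccontr)
  assume H: "\<not> ?thesis"
  have fP: "finite P" using P finite_subset by blast
  have all: "\<exists>l\<in>Ls. insert c P \<subseteq> l" if "c \<in> {1..n} - P" for c
  proof -
    have "card (insert c P) = 3" using that fP P by simp
    thus ?thesis using H that P unfolding bas_def by auto
  qed
  have "card ({1..n} - P) \<ge> 3" using P n by (simp add: card_Diff_subset fP)
  then obtain c0 where c0: "c0 \<in> {1..n} - P" by (metis all_not_in_conv card.empty not_numeral_le_zero)
  then obtain l0 where l0: "l0 \<in> Ls" "insert c0 P \<subseteq> l0" using all by blast
  have "{1..n} \<subseteq> l0"
  proof
    fix c assume c: "c \<in> {1..n}"
    show "c \<in> l0"
    proof (cases "c \<in> P")
      case True thus ?thesis using l0 by blast
    next
      case False
      then obtain l where l: "l \<in> Ls" "insert c P \<subseteq> l" using all c by blast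
      have "l = l0" using uniq_line[OF lf l(1) l0(1), of P] l l0 P by auto
      thus ?thesis using l by blast
    qed
  qed
  hence "card {1..n} \<le> card l0" using lf l0 unfolding linefam_def
    by (meson card_mono finite_atLeastAtMost finite_subset)
  thus False using lf l0 n unfolding linefam_def by auto
qed

lemma bas_matroid:
  assumes lf: "linefam n Ls" and n: "5 \<le> n"
  shows "matroid_bases {1..n} (bas n Ls)"
  unfolding matroid_bases_def
proof (intro conjI ballI)
  have "{1,2} \<subseteq> {1..n}" "card {1::nat,2} = 2" using n by auto
  then obtain c where "insert c {1,2} \<in> bas n Ls" using extend_pair[OF lf n] by blast
  thus "bas n Ls \<noteq> {}" by blast
next
  fix B assume "B \<in> bas n Ls" thus "B \<subseteq> {1..n}" unfolding bas_def by blast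
next
  fix B1 B2 x assume B1: "B1 \<in> bas n Ls" and B2: "B2 \<in> bas n Ls" and x: "x \<in> B1 - B2"
  define P where "P = B1 - {x}"
  have fB: "finite B1" "finite B2" using B1 B2 unfolding bas_def by (auto intro: card_ge_0_finite)
  have cP: "card P = 2" using B1 x fB unfolding P_def bas_def by auto
  have ne: "B2 - B1 \<noteq> {}"
  proof
    assume "B2 - B1 = {}"
    hence "B2 \<subseteq> B1" by blast
    hence "B2 = B1" using card_subset_eq[of B1 B2] B1 B2 fB unfolding bas_def by simp
    thus False using x by blast
  qed
  have "\<exists>y\<in>B2 - B1. \<forall>l\<in>Ls. P \<subseteq> l \<longrightarrow> y \<notin> l"
  proof (rule ccontr)
    assume "\<not> ?thesis"
    hence A: "\<forall>y\<in>B2 - B1. \<exists>l\<in>Ls. P \<subseteq> l \<and> y \<in> l" by blast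
    obtain y0 where y0: "y0 \<in> B2 - B1" using ne by blast
    then obtain l0 where l0: "l0 \<in> Ls" "P \<subseteq> l0" using A by blast
    have "B2 \<subseteq> l0"
    proof
      fix z assume z: "z \<in> B2"
      show "z \<in> l0"
      proof (cases "z \<in> B1")
        case True
        hence "z \<in> P" using z x unfolding P_def by auto
        thus ?thesis using l0 by blast
      next
        case False
        then obtain l where "l \<in> Ls" "P \<subseteq> l" "z \<in> l" using A z by blast
        moreover have "l = l0" using uniq_line[OF lf \<open>l \<in> Ls\<close> l0(1), of P] cP l0 \<open>P \<subseteq> l\<close> by simp
        ultimately show ?thesis by blast
      qed
    qed
    thus False using B2 l0 unfolding bas_def by blast
  qed
  then obtain y where y: "y \<in> B2 - B1" "\<forall>l\<in>Ls. P \<subseteq> l \<longrightarrow> y \<notin> l" by blast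
  have "insert y P \<in> bas n Ls"
    unfolding bas_def
  proof (intro CollectI conjI ballI)
    show "insert y P \<subseteq> {1..n}" using y B1 B2 unfolding bas_def P_def by auto
    show "card (insert y P) = 3" using y cP fB unfolding P_def by auto
    fix l assume "l \<in> Ls" thus "\<not> insert y P \<subseteq> l" using y by blast
  qed
  thus "\<exists>y\<in>B2 - B1. insert y (B1 - {x}) \<in> bas n Ls" using y unfolding P_def by blast
qed

lemma small_indep:
  assumes lf: "linefam n Ls" and n: "5 \<le> n" and S: "S \<subseteq> {1..n}" "card S \<le> 2"
  shows "indep (bas n Ls) S"
proof -
  have fS: "finite S" by (rule finite_subset[OF S(1)]) simp
  have "2 - card S \<le> card ({1..n} - S)" using S n fS by (simp add: card_Diff_subset)
  then obtain R where R: "R \<subseteq> {1..n} - S" "card R = 2 - card S" "finite R"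
    using obtain_subset_with_card_n by metis
  define P where "P = S \<union> R"
  have "card P = 2" unfolding P_def using R fS S by (subst card_Un_disjoint) auto
  moreover have "P \<subseteq> {1..n}" using R S unfolding P_def by auto
  ultimately obtain c where "insert c P \<in> bas n Ls" using extend_pair[OF lf n] by blast
  thus ?thesis unfolding indep_def P_def by (intro bexI[of _ "insert c (S \<union> R)"]) auto
qed

lemma bas_paving:
  assumes lf: "linefam n Ls" and n: "5 \<le> n"
  shows "paving {1..n} (bas n Ls) 3"
  unfolding paving_def
proof (intro allI impI)
  fix C assume "circuit {1..n} (bas n Ls) C"
  hence C: "C \<subseteq> {1..n}" "\<not> indep (bas n Ls) C" unfolding circuit_def by auto
  show "3 \<le> card C"
  proof (rule ccontr)
    assume "\<not> 3 \<le> card C"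
    hence "indep (bas n Ls) C" using small_indep[OF lf n C(1)] by simp
    thus False using C by blast
  qed
qed

lemma bas_rank: "has_rank (bas n Ls) 3"
  unfolding has_rank_def bas_def by auto



definition Lin :: "nat \<Rightarrow> nat set set set" where "Lin n = {H. H \<subseteq> T3 n \<and> lin H}"
definition con :: "nat set set \<Rightarrow> nat set \<Rightarrow> nat set set" where
  "con H L = insert L {Y\<in>H. card (Y \<inter> L) \<le> 1}"
definition Q :: "nat \<Rightarrow> nat set set set" where
  "Q n = {con H (insert x T) | H T x. H \<in> Lin n \<and> T \<in> H \<and> x \<in> {1..n} - T}"
definition sub3 :: "nat set \<Rightarrow> nat set set" where "sub3 L = {X. X \<subseteq> L \<and> card X = 3}"

lemma finite_T3: "finite (T3 n)"
  unfolding T3_def by (rule finite_subset[of _ "Pow {1..n}"]) auto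

lemma finite_Lin: "finite (Lin n)"
  unfolding Lin_def by (rule finite_subset[of _ "Pow (T3 n)"]) (auto simp: finite_T3)

lemma T3_finite_mem: "X \<in> T3 n \<Longrightarrow> finite X"
  unfolding T3_def by (auto intro: card_ge_0_finite)

lemma Lin_linefam: "H \<in> Lin n \<Longrightarrow> linefam n H"
  unfolding Lin_def linefam_def T3_def by auto

lemma Lin_recover:
  assumes "H \<in> Lin n" shows "T3 n - bas n H = H"
proof (intro set_eqI iffI)
  fix X assume X: "X \<in> T3 n - bas n H"
  then obtain l where l: "l \<in> H" "X \<subseteq> l" unfolding bas_def T3_def by auto
  have "l \<in> T3 n" using l assms unfolding Lin_def by auto
  hence "X = l" using card_subset_eq[of l X] l X T3_finite_mem[of l n] unfolding T3_def by auto
  thus "X \<in> H" using l by simp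
next
  fix X assume X: "X \<in> H"
  hence "X \<in> T3 n" using assms unfolding Lin_def by auto
  moreover have "X \<notin> bas n H" using X unfolding bas_def by auto
  ultimately show "X \<in> T3 n - bas n H" by simp
qed

definition qstruct :: "nat \<Rightarrow> nat set \<Rightarrow> nat set set \<Rightarrow> bool" where
  "qstruct n L H' \<longleftrightarrow> L \<subseteq> {1..n} \<and> card L = 4 \<and> H' \<subseteq> T3 n \<and> lin H' \<and> (\<forall>Y\<in>H'. card (Y \<inter> L) \<le> 1)"

lemma Q_struct:
  assumes "G \<in> Q n" shows "\<exists>L H'. G = insert L H' \<and> qstruct n L H'"
proof -
  obtain H T x where G: "G = con H (insert x T)" "H \<in> Lin n" "T \<in> H" "x \<in> {1..n} - T"
    using assms unfolding Q_def by blast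
  have T: "T \<in> T3 n" using G unfolding Lin_def by auto
  hence fT: "finite T" by (rule T3_finite_mem)
  let ?L = "insert x T" and ?H = "{Y\<in>H. card (Y \<inter> insert x T) \<le> 1}"
  have "qstruct n ?L ?H"
    unfolding qstruct_def
  proof (intro conjI)
    show "?L \<subseteq> {1..n}" using G T unfolding T3_def by auto
    show "card ?L = 4" using G T fT unfolding T3_def by auto
    show "?H \<subseteq> T3 n" using G unfolding Lin_def by auto
    show "lin ?H" using G unfolding Lin_def lin_def by auto
    show "\<forall>Y\<in>?H. card (Y \<inter> ?L) \<le> 1" by auto
  qed
  thus ?thesis using G unfolding con_def by blast
qed

lemma qstruct_linefam:
  assumes "qstruct n L H'" shows "linefam n (insert L H')"
proof -
  have A: "\<forall>l\<in>insert L H'. l \<subseteq> {1..n} \<and> 3 \<le> card l \<and> card l \<le> 4"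
    using assms unfolding qstruct_def T3_def by auto
  have B: "lin (insert L H')" unfolding lin_def
  proof (intro ballI impI)
    fix X Y assume XY: "X \<in> insert L H'" "Y \<in> insert L H'" "X \<noteq> Y"
    show "card (X \<inter> Y) \<le> 1"
    proof (cases "X = L")
      case True
      hence "Y \<in> H'" using XY by auto
      hence "card (Y \<inter> L) \<le> 1" using assms unfolding qstruct_def by blast
      thus ?thesis using True by (simp add: Int_commute)
    next
      case False
      hence X: "X \<in> H'" using XY by auto
      show ?thesis
      proof (cases "Y = L")
        case True thus ?thesis using assms X unfolding qstruct_def by simp
      next
        case False
        hence Y: "Y \<in> H'" using XY by auto
        have "lin H'" using assms unfolding qstruct_def by blast
        thus ?thesis using linD[OF _ X Y XY(3)] by blast
      qed
    qed
  qed
  show ?thesis unfolding linefam_def using A B by blast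
qed

lemma qstruct_recover:
  assumes "qstruct n L H'" shows "T3 n - bas n (insert L H') = H' \<union> sub3 L"
proof (intro set_eqI iffI)
  fix X assume X: "X \<in> T3 n - bas n (insert L H')"
  then obtain l where l: "l \<in> insert L H'" "X \<subseteq> l" unfolding bas_def T3_def by auto
  show "X \<in> H' \<union> sub3 L"
  proof (cases "l = L")
    case True thus ?thesis using X l unfolding sub3_def T3_def by auto
  next
    case False
    hence "l \<in> T3 n" using l assms unfolding qstruct_def by auto
    hence "X = l" using card_subset_eq[of l X] l X T3_finite_mem[of l n] unfolding T3_def by auto
    thus ?thesis using l False by simp
  qed
next
  fix X assume X: "X \<in> H' \<union> sub3 L"
  hence "X \<in> T3 n" using assms unfolding qstruct_def sub3_def T3_def by auto
  moreover have "X \<notin> bas n (insert L H')" using X unfolding bas_def sub3_def by auto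
  ultimately show "X \<in> T3 n - bas n (insert L H')" by simp
qed

lemma four_sub:
  assumes "card L = 4" "a \<in> L" shows "card (L - {a}) = 3"
  using assms by simp

lemma four_int:
  assumes "card L = 4" "a \<in> L" "b \<in> L" "a \<noteq> b"
  shows "card ((L - {a}) \<inter> (L - {b})) = 2"
proof -
  have "(L - {a}) \<inter> (L - {b}) = L - {a,b}" by auto
  moreover have "finite L" using assms(1) by (intro card_ge_0_finite) simp
  ultimately show ?thesis using assms by (simp add: card_Diff_subset)
qed

lemma four_other:
  assumes "card L = 4" "a \<in> L" shows "\<exists>b\<in>L. b \<noteq> a"
proof -
  have c3: "card (L - {a}) = 3" using assms by simp
  have "L - {a} \<noteq> {}"
  proof
    assume "L - {a} = {}"
    hence "card (L - {a}) = 0" by (simp only: card.empty)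
    thus False using c3 by simp
  qed
  thus ?thesis by auto
qed

lemma L_unique:
  assumes lin: "lin H'" and H1: "\<forall>Y\<in>H'. card (Y \<inter> L1) \<le> 1"
    and c1: "card L1 = 4" and c2: "card L2 = 4"
    and sub: "sub3 L2 \<subseteq> H' \<union> sub3 L1"
  shows "L2 \<subseteq> L1"
proof -
  have f1: "finite L1" using c1 by (intro card_ge_0_finite) simp
  have s3: "L2 - {x} \<in> sub3 L2" if "x \<in> L2" for x
    unfolding sub3_def using four_sub[OF c2 that] by blast
  have A: "L2 - {a} \<subseteq> L1" if a: "a \<in> L2" for a
  proof (rule ccontr)
    assume na: "\<not> L2 - {a} \<subseteq> L1"
    have "L2 - {a} \<in> H' \<union> sub3 L1" using s3[OF a] sub by blast
    hence inH: "L2 - {a} \<in> H'" using na unfolding sub3_def by blast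
    obtain b where b: "b \<in> L2" "b \<noteq> a" using four_other[OF c2 a] by blast
    have ci: "card ((L2 - {a}) \<inter> (L2 - {b})) = 2" using four_int[OF c2 a b(1)] b by simp
    have "L2 - {b} \<in> H' \<union> sub3 L1" using s3[OF b(1)] sub by blast
    hence "L2 - {b} \<in> H' \<or> L2 - {b} \<subseteq> L1" unfolding sub3_def by blast
    thus False
    proof
      assume bH: "L2 - {b} \<in> H'"
      have ne: "L2 - {a} \<noteq> L2 - {b}" using a b by blast
      have "card ((L2 - {a}) \<inter> (L2 - {b})) \<le> 1" by (rule linD[OF lin inH bH ne])
      thus False using ci by simp
    next
      assume "L2 - {b} \<subseteq> L1"
      hence "card ((L2 - {a}) \<inter> (L2 - {b})) \<le> card ((L2 - {a}) \<inter> L1)"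
        using f1 by (intro card_mono) auto
      moreover have "card ((L2 - {a}) \<inter> L1) \<le> 1" using H1 inH by blast
      ultimately show False using ci by simp
    qed
  qed
  show ?thesis
  proof
    fix z assume z: "z \<in> L2"
    obtain a where "a \<in> L2" "a \<noteq> z" using four_other[OF c2 z] by blast
    thus "z \<in> L1" using A z by blast
  qed
qed

lemma card4_ne: assumes "card L = 4" shows "\<exists>a. a \<in> L"
proof (rule ccontr)
  assume "\<not> (\<exists>a. a \<in> L)"
  hence "L = {}" by blast
  hence "card L = 0" by (simp only: card.empty)
  thus False using assms by simp
qed

lemma sub3_not_lin:
  assumes "card L = 4" "sub3 L \<subseteq> H" shows "\<not> lin H"
proof
  assume lin: "lin H"
  obtain a where a: "a \<in> L" using card4_ne[OF assms(1)] by blast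
  obtain b where b: "b \<in> L" "b \<noteq> a" using four_other[OF assms(1) a] by blast
  have s3: "L - {x} \<in> sub3 L" if "x \<in> L" for x
    unfolding sub3_def using four_sub[OF assms(1) that] by blast
  have m1: "L - {a} \<in> H" using assms(2) s3 a by blast
  have m2: "L - {b} \<in> H" using assms(2) s3 b by blast
  have ne: "L - {a} \<noteq> L - {b}" using a b by blast
  have "card ((L - {a}) \<inter> (L - {b})) \<le> 1" by (rule linD[OF lin m1 m2 ne])
  moreover have "card ((L - {a}) \<inter> (L - {b})) = 2" using four_int[OF assms(1) a b(1)] b by simp
  ultimately show False by simp
qed

lemma qstruct_disj: "qstruct n L H' \<Longrightarrow> H' \<inter> sub3 L = {}"
proof -
  assume q: "qstruct n L H'"
  { fix Y assume Y: "Y \<in> H'" "Y \<in> sub3 L"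
    hence "Y \<inter> L = Y" unfolding sub3_def by auto
    hence "card (Y \<inter> L) = 3" using Y unfolding sub3_def by simp
    moreover have "card (Y \<inter> L) \<le> 1" using q Y unfolding qstruct_def by blast
    ultimately have False by simp }
  thus ?thesis by blast
qed

lemma cross_ne:
  assumes H: "H \<in> Lin n" and G: "G \<in> Q n" and e: "bas n H = bas n G"
  shows False
proof -
  obtain L H' where LH: "G = insert L H'" "qstruct n L H'" using Q_struct[OF G] by blast
  have "H = H' \<union> sub3 L" using Lin_recover[OF H] qstruct_recover[OF LH(2)] e LH(1) by simp
  hence "sub3 L \<subseteq> H" by simp
  moreover have "card L = 4" using LH unfolding qstruct_def by simp
  moreover have "lin H" using H unfolding Lin_def by simp
  ultimately show False using sub3_not_lin by blast
qed

lemma QQ_inj: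
  assumes Q1: "G1 \<in> Q n" and Q2: "G2 \<in> Q n" and eq: "bas n G1 = bas n G2"
  shows "G1 = G2"
proof -
  obtain L1 H1 where LH1: "G1 = insert L1 H1" "qstruct n L1 H1" using Q_struct[OF Q1] by blast
  obtain L2 H2 where LH2: "G2 = insert L2 H2" "qstruct n L2 H2" using Q_struct[OF Q2] by blast
  have E: "H1 \<union> sub3 L1 = H2 \<union> sub3 L2"
    using qstruct_recover[OF LH1(2)] qstruct_recover[OF LH2(2)] eq LH1(1) LH2(1) by simp
  have q1: "lin H1" "\<forall>Y\<in>H1. card (Y \<inter> L1) \<le> 1" "card L1 = 4" using LH1(2) unfolding qstruct_def by auto
  have q2: "lin H2" "\<forall>Y\<in>H2. card (Y \<inter> L2) \<le> 1" "card L2 = 4" using LH2(2) unfolding qstruct_def by auto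
  have s1: "sub3 L2 \<subseteq> H1 \<union> sub3 L1" using E by simp
  have s2: "sub3 L1 \<subseteq> H2 \<union> sub3 L2" by (metis E Un_upper2)
  have "L2 \<subseteq> L1" by (rule L_unique[OF q1(1,2,3) q2(3) s1])
  moreover have "L1 \<subseteq> L2" by (rule L_unique[OF q2(1,2,3) q1(3) s2])
  ultimately have L: "L1 = L2" by (rule subset_antisym[rotated])
  have "H1 = (H1 \<union> sub3 L1) - sub3 L1" using qstruct_disj[OF LH1(2)] by blast
  also have "\<dots> = (H2 \<union> sub3 L2) - sub3 L2" using E L by simp
  also have "\<dots> = H2" using qstruct_disj[OF LH2(2)] by blast
  finally show ?thesis using L LH1 LH2 by simp
qed

lemma bas_inj: "inj_on (bas n) (Lin n \<union> Q n)"
proof (rule inj_onI)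
  fix G1 G2 assume G1: "G1 \<in> Lin n \<union> Q n" and G2: "G2 \<in> Lin n \<union> Q n" and eq: "bas n G1 = bas n G2"
  show "G1 = G2"
  proof (cases "G1 \<in> Lin n")
    case True
    show ?thesis
    proof (cases "G2 \<in> Lin n")
      case True
      thus ?thesis using Lin_recover[OF True] Lin_recover[OF \<open>G1 \<in> Lin n\<close>] eq by simp
    next
      case False
      hence "G2 \<in> Q n" using G2 by simp
      thus ?thesis using cross_ne[OF True _ eq] by simp
    qed
  next
    case False
    hence Q1: "G1 \<in> Q n" using G1 by simp
    show ?thesis
    proof (cases "G2 \<in> Lin n")
      case True thus ?thesis using cross_ne[OF True Q1] eq by simp
    next
      case False
      hence Q2: "G2 \<in> Q n" using G2 by simp
      show ?thesis by (rule QQ_inj[OF Q1 Q2 eq])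
    qed
  qed
qed



lemma mrank_finite: "finite Z \<Longrightarrow> finite {card I | I. I \<subseteq> Z \<and> indep \<B> I}"
proof -
  assume "finite Z"
  have "{card I | I. I \<subseteq> Z \<and> indep \<B> I} \<subseteq> card ` Pow Z" by auto
  moreover have "finite (card ` Pow Z)" using \<open>finite Z\<close> by simp
  ultimately show ?thesis by (rule finite_subset)
qed

lemma mrank_ge: "finite Z \<Longrightarrow> I \<subseteq> Z \<Longrightarrow> indep \<B> I \<Longrightarrow> card I \<le> mrank \<B> Z"
  unfolding mrank_def by (rule Max_ge) (auto simp: mrank_finite)

lemma mrank_witness:
  assumes "finite Z" "indep \<B> {}"
  shows "\<exists>I. I \<subseteq> Z \<and> indep \<B> I \<and> card I = mrank \<B> Z"
proof -
  have "mrank \<B> Z \<in> {card I | I. I \<subseteq> Z \<and> indep \<B> I}"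
    unfolding mrank_def
  proof (rule Max_in)
    show "finite {card I | I. I \<subseteq> Z \<and> indep \<B> I}" using assms(1) by (rule mrank_finite)
    have "card {} \<in> {card I | I. I \<subseteq> Z \<and> indep \<B> I}"
      by (rule CollectI, rule exI[of _ "{}"]) (use assms(2) in simp)
    thus "{card I | I. I \<subseteq> Z \<and> indep \<B> I} \<noteq> {}" by blast
  qed
  thus ?thesis by auto
qed

lemma sparse_in_Lin:
  assumes M: "matroid_bases {1..n} \<B>" and R: "has_rank \<B> 3" and S: "sparse_paving {1..n} \<B> 3"
  shows "\<B> \<in> bas n ` Lin n"
proof -
  define H where "H = T3 n - \<B>"
  have BT: "\<B> \<subseteq> T3 n" using M R unfolding matroid_bases_def has_rank_def T3_def by auto
  have bas: "bas n H = \<B>"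
  proof (intro set_eqI iffI)
    fix B assume B: "B \<in> bas n H"
    hence "B \<in> T3 n" unfolding bas_def T3_def by auto
    moreover have "B \<notin> H" using B unfolding bas_def by auto
    ultimately show "B \<in> \<B>" unfolding H_def by auto
  next
    fix B assume B: "B \<in> \<B>"
    hence BT3: "B \<in> T3 n" using BT by auto
    have "\<not> B \<subseteq> l" if l: "l \<in> H" for l
    proof
      assume sub: "B \<subseteq> l"
      have "l \<in> T3 n" using l unfolding H_def by auto
      hence "B = l" using card_subset_eq[of l B] sub BT3 T3_finite_mem[of l n] unfolding T3_def by auto
      thus False using l B unfolding H_def by auto
    qed
    thus "B \<in> bas n H" using BT3 unfolding bas_def T3_def by auto
  qed
  have "lin H" unfolding lin_def
  proof (intro ballI impI)
    fix X Y assume X: "X \<in> H" and Y: "Y \<in> H" and XY: "X \<noteq> Y"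
    show "card (X \<inter> Y) \<le> 1"
    proof (rule ccontr)
      assume big: "\<not> card (X \<inter> Y) \<le> 1"
      have XT: "X \<in> T3 n" "X \<notin> \<B>" using X unfolding H_def by auto
      have YT: "Y \<in> T3 n" "Y \<notin> \<B>" using Y unfolding H_def by auto
      have fX: "finite X" "finite Y" using XT YT T3_finite_mem by auto
      define P where "P = X \<inter> Y"
      have "card P \<le> card X" unfolding P_def using fX by (intro card_mono) auto
      moreover have "card P \<noteq> 3"
      proof
        assume "card P = 3"
        hence "P = X" "P = Y" using card_subset_eq[of X P] card_subset_eq[of Y P] fX XT YT
          unfolding P_def T3_def by auto
        thus False using XY by simp
      qed
      ultimately have cP: "card P = 2" using big XT unfolding P_def T3_def by auto
      obtain a where a: "X = insert a P" "a \<notin> P"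
      proof -
        have "card (X - P) = 1" using cP XT fX unfolding P_def T3_def
          by (subst card_Diff_subset) auto
        then obtain a where "X - P = {a}" by (auto simp: card_Suc_eq)
        thus ?thesis using that unfolding P_def by blast
      qed
      obtain b where b: "Y = insert b P" "b \<notin> P"
      proof -
        have "card (Y - P) = 1" using cP YT fX unfolding P_def T3_def
          by (subst card_Diff_subset) auto
        then obtain b where "Y - P = {b}" by (auto simp: card_Suc_eq)
        thus ?thesis using that unfolding P_def by blast
      qed
      have ab: "a \<noteq> b" using a b XY by auto
      have "X \<subseteq> {1..n} \<and> card X = 3 \<longrightarrow> X \<in> \<B> \<or> (circuit {1..n} \<B> X \<and> hyperplane {1..n} \<B> 3 X)"
        using S unfolding sparse_paving_def by blast
      hence CH: "circuit {1..n} \<B> X" "hyperplane {1..n} \<B> 3 X" using XT unfolding T3_def by auto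
      have "P \<subset> X" using a by auto
      hence iP: "indep \<B> P" using CH(1) unfolding circuit_def by blast
      then obtain B0 where B0: "B0 \<in> \<B>" "P \<subseteq> B0" unfolding indep_def by blast
      have B0T3: "B0 \<in> T3 n" using B0(1) BT by blast
      have fB0: "finite B0" "card B0 = 3" using T3_finite_mem[OF B0T3] B0T3 unfolding T3_def by simp_all
      have fP: "finite P" by (rule finite_subset[OF B0(2) fB0(1)])
      have "card (B0 - P) = 1" using card_Diff_subset[OF fP B0(2)] fB0(2) cP by simp
      then obtain w where w: "B0 - P = {w}" by (auto simp: card_Suc_eq)
      have B0w: "B0 = insert w P" using w B0 by auto
      have wa: "w \<noteq> a" using B0w a XT B0 by auto
      have wb: "w \<noteq> b" using B0w b YT B0 by auto
      have wP: "w \<notin> P" using w by auto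
      have bn: "b \<in> {1..n} - X" using b YT a ab unfolding T3_def by auto
      have hp: "\<forall>e\<in>{1..n} - X. mrank \<B> X < mrank \<B> (insert e X)"
        using CH(2) unfolding hyperplane_def by (rule conjunct2[OF conjunct2])
      have "mrank \<B> X < mrank \<B> (insert b X)" by (rule bspec[OF hp bn])
      have PX: "P \<subseteq> X" using a(1) by blast
      have "card P \<le> mrank \<B> X" by (rule mrank_ge[OF fX(1) PX iP])
      hence "2 \<le> mrank \<B> X" using cP by simp
      moreover note \<open>mrank \<B> X < mrank \<B> (insert b X)\<close>
      ultimately have m3: "3 \<le> mrank \<B> (insert b X)" by simp
      have "indep \<B> {}" using B0 unfolding indep_def by blast
      then obtain I where I: "I \<subseteq> insert b X" "indep \<B> I" "card I = mrank \<B> (insert b X)"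
        using mrank_witness[of "insert b X" \<B>] fX by auto
      obtain B where B: "B \<in> \<B>" "I \<subseteq> B" using I unfolding indep_def by blast
      have BT3: "B \<in> T3 n" using B(1) BT by blast
      have fB: "finite B" "card B = 3" using T3_finite_mem[OF BT3] BT3 unfolding T3_def by simp_all
      have "card B \<le> card I" using fB I m3 by simp
      hence "I = B" by (rule card_seteq[OF fB(1) B(2)])
      hence Bsub: "B \<subseteq> insert a (insert b P)" using I a by auto
      have "w \<notin> B" using Bsub wa wb wP by auto
      hence wB: "w \<in> B0 - B" using B0w by auto
      have ex: "\<forall>B1\<in>\<B>. \<forall>B2\<in>\<B>. \<forall>x\<in>B1 - B2. \<exists>y\<in>B2 - B1. insert y (B1 - {x}) \<in> \<B>"
        using conjunct2[OF conjunct2[OF M[unfolded matroid_bases_def]]] .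
      obtain y where y: "y \<in> B - B0" "insert y (B0 - {w}) \<in> \<B>"
        using ex[rule_format, OF B0(1) B(1) wB] by blast
      have "B0 - {w} = P" using B0w wP by auto
      hence yins: "insert y P \<in> \<B>" using y by simp
      have "y = a \<or> y = b" using y Bsub B0 by auto
      thus False
      proof
        assume "y = a" thus False using yins a XT by simp
      next
        assume "y = b" thus False using yins b YT by simp
      qed
    qed
  qed
  moreover have "H \<subseteq> T3 n" unfolding H_def by blast
  ultimately have HL: "H \<in> Lin n" unfolding Lin_def by simp
  show ?thesis by (rule rev_image_eqI[of H _ _ "bas n", OF HL bas[symmetric]])
qed

lemma s_le: "s_count n 3 \<le> card (Lin n)"
proof -
  have "{\<B>. matroid_bases {1..n} \<B> \<and> has_rank \<B> 3 \<and> sparse_paving {1..n} \<B> 3} \<subseteq> bas n ` Lin n"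
    using sparse_in_Lin by blast
  hence "s_count n 3 \<le> card (bas n ` Lin n)" unfolding s_count_def
    by (intro card_mono) (auto simp: finite_Lin)
  also have "\<dots> \<le> card (Lin n)" by (rule card_image_le[OF finite_Lin])
  finally show ?thesis .
qed

lemma finite_mat: "finite {\<B>. matroid_bases {1..(n::nat)} \<B> \<and> P \<B>}"
proof (rule finite_subset[of _ "Pow (Pow {1..n})"])
  show "{\<B>. matroid_bases {1..n} \<B> \<and> P \<B>} \<subseteq> Pow (Pow {1..n})" by (auto simp: matroid_bases_def)
  show "finite (Pow (Pow {1..n::nat}))" by simp
qed

lemma s_pos: assumes "5 \<le> n" shows "1 \<le> s_count n 3"
proof -
  define S where "S = {\<B>. matroid_bases {1..n} \<B> \<and> has_rank \<B> 3 \<and> sparse_paving {1..n} \<B> 3}"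
  have lf: "linefam n {}" unfolding linefam_def lin_def by simp
  have m: "matroid_bases {1..n} (bas n {})" by (rule bas_matroid[OF lf assms])
  have r: "has_rank (bas n {}) 3" by (rule bas_rank)
  have sp: "sparse_paving {1..n} (bas n {}) 3" unfolding sparse_paving_def bas_def by simp
  have "bas n {} \<in> S" unfolding S_def using m r sp by simp
  hence ne: "S \<noteq> {}" by blast
  have fin: "finite S" unfolding S_def by (rule finite_mat)
  have "0 < card S" using fin ne by (simp add: card_gt_0_iff)
  thus ?thesis unfolding s_count_def S_def by simp
qed

lemma Lin_Q_disj: "Lin n \<inter> Q n = {}"
proof -
  { fix G assume GL: "G \<in> Lin n" and GQ: "G \<in> Q n"
    obtain L H' where LH: "G = insert L H'" "qstruct n L H'" using Q_struct[OF GQ] by blast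
    have "L \<in> G" using LH by simp
    hence "L \<in> T3 n" using GL unfolding Lin_def by blast
    hence "card L = 3" unfolding T3_def by simp
    moreover have "card L = 4" using LH unfolding qstruct_def by simp
    ultimately have False by simp }
  thus ?thesis by blast
qed

lemma finite_Q: "finite (Q n)"
proof -
  have "Q n \<subseteq> Pow (Pow {1..n})"
  proof
    fix G assume GQ: "G \<in> Q n"
    obtain L H' where LH: "G = insert L H'" "qstruct n L H'" using Q_struct[OF GQ] by blast
    have "L \<subseteq> {1..n}" "H' \<subseteq> T3 n" using LH unfolding qstruct_def by simp_all
    hence "H' \<subseteq> Pow {1..n}" unfolding T3_def by blast
    thus "G \<in> Pow (Pow {1..n})" using LH \<open>L \<subseteq> {1..n}\<close> by simp
  qed
  thus ?thesis by (rule finite_subset) simp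
qed

lemma p_ge: assumes n: "5 \<le> n" shows "card (Lin n) + card (Q n) \<le> p_count n 3"
proof -
  have "bas n ` (Lin n \<union> Q n) \<subseteq> {\<B>. matroid_bases {1..n} \<B> \<and> has_rank \<B> 3 \<and> paving {1..n} \<B> 3}"
  proof
    fix B assume "B \<in> bas n ` (Lin n \<union> Q n)"
    then obtain G where G: "B = bas n G" "G \<in> Lin n \<union> Q n" by blast
    have lf: "linefam n G"
    proof (cases "G \<in> Lin n")
      case True thus ?thesis by (rule Lin_linefam)
    next
      case False
      hence GQ: "G \<in> Q n" using G by simp
      obtain L H' where "G = insert L H'" "qstruct n L H'" using Q_struct[OF GQ] by blast
      thus ?thesis using qstruct_linefam by simp
    qed
    have "matroid_bases {1..n} B" using bas_matroid[OF lf n] G(1) by simp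
    moreover have "has_rank B 3" using bas_rank G(1) by simp
    moreover have "paving {1..n} B 3" using bas_paving[OF lf n] G(1) by simp
    ultimately show "B \<in> {\<B>. matroid_bases {1..n} \<B> \<and> has_rank \<B> 3 \<and> paving {1..n} \<B> 3}"
      by simp
  qed
  hence "card (bas n ` (Lin n \<union> Q n)) \<le> p_count n 3" unfolding p_count_def
    by (rule card_mono[OF finite_mat])
  moreover have "card (bas n ` (Lin n \<union> Q n)) = card (Lin n \<union> Q n)"
    by (rule card_image[OF bas_inj])
  moreover have "card (Lin n \<union> Q n) = card (Lin n) + card (Q n)"
    by (rule card_Un_disjoint[OF finite_Lin finite_Q Lin_Q_disj])
  ultimately show ?thesis by simp
qed



definition Lk :: "nat \<Rightarrow> nat \<Rightarrow> nat set set set" where "Lk n k = {H\<in>Lin n. card H = k}"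
definition addT :: "nat \<Rightarrow> nat set set \<Rightarrow> nat set set" where
  "addT n H = {T\<in>T3 n. \<forall>X\<in>H. card (X \<inter> T) \<le> 1}"
definition sub2 :: "nat set \<Rightarrow> nat set set" where "sub2 X = {P. P \<subseteq> X \<and> card P = 2}"

lemma card_T3: "card (T3 n) = n choose 3"
  unfolding T3_def using n_subsets[of "{1..n}" 3] by simp

lemma pairs_card:
  assumes "card P = 2" shows "card {T\<in>T3 n. P \<subseteq> T} \<le> n"
proof -
  have fP: "finite P" using assms by (intro card_ge_0_finite) simp
  have "{T\<in>T3 n. P \<subseteq> T} \<subseteq> (\<lambda>c. insert c P) ` {1..n}"
  proof
    fix T assume T: "T \<in> {T\<in>T3 n. P \<subseteq> T}"
    hence TT: "T \<in> T3 n" "P \<subseteq> T" by auto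
    have fT: "finite T" by (rule T3_finite_mem[OF TT(1)])
    have "card (T - P) = 1" using card_Diff_subset[OF fP TT(2)] TT(1) assms unfolding T3_def by simp
    then obtain c where c: "T - P = {c}" by (auto simp: card_Suc_eq)
    hence "T = insert c P" using TT(2) by blast
    moreover have "c \<in> {1..n}" using c TT(1) unfolding T3_def by blast
    ultimately show "T \<in> (\<lambda>c. insert c P) ` {1..n}" by blast
  qed
  hence "card {T\<in>T3 n. P \<subseteq> T} \<le> card ((\<lambda>c. insert c P) ` {1..n})"
    by (rule card_mono[rotated]) simp
  also have "\<dots> \<le> card {1..n}" by (rule card_image_le) simp
  finally show ?thesis by simp
qed

lemma card_sub2_3: "card X = 3 \<Longrightarrow> card (sub2 X) = 3"
proof -
  assume c: "card X = 3"
  hence "finite X" by (intro card_ge_0_finite) simp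
  thus ?thesis unfolding sub2_def using n_subsets[of X 2] c by (simp add: numeral_eq_Suc)
qed

lemma card_sub2_4: "card X = 4 \<Longrightarrow> card (sub2 X) = 6"
proof -
  assume c: "card X = 4"
  hence "finite X" by (intro card_ge_0_finite) simp
  thus ?thesis unfolding sub2_def using n_subsets[of X 2] c by (simp add: numeral_eq_Suc)
qed

lemma big_int_pair:
  assumes "finite X" "2 \<le> card (X \<inter> T)" shows "\<exists>P\<in>sub2 X. P \<subseteq> T"
proof -
  obtain P where P: "P \<subseteq> X \<inter> T" "card P = 2" "finite P"
    using obtain_subset_with_card_n[OF assms(2)] by metis
  hence "P \<in> sub2 X" unfolding sub2_def by blast
  thus ?thesis using P by blast
qed

lemma blocked_card:
  assumes HT: "H \<subseteq> T3 n" and fH: "finite H"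
  shows "card {T\<in>T3 n. \<exists>X\<in>H. 2 \<le> card (X \<inter> T)} \<le> 3 * card H * n"
proof -
  have sub: "{T\<in>T3 n. \<exists>X\<in>H. 2 \<le> card (X \<inter> T)} \<subseteq> (\<Union>X\<in>H. \<Union>P\<in>sub2 X. {T\<in>T3 n. P \<subseteq> T})"
  proof
    fix T assume "T \<in> {T\<in>T3 n. \<exists>X\<in>H. 2 \<le> card (X \<inter> T)}"
    then obtain X where X: "X \<in> H" "2 \<le> card (X \<inter> T)" "T \<in> T3 n" by blast
    have "finite X" using X(1) HT T3_finite_mem by blast
    then obtain P where "P \<in> sub2 X" "P \<subseteq> T" using big_int_pair X(2) by blast
    thus "T \<in> (\<Union>X\<in>H. \<Union>P\<in>sub2 X. {T\<in>T3 n. P \<subseteq> T})" using X by blast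
  qed
  have fin: "finite (\<Union>X\<in>H. \<Union>P\<in>sub2 X. {T\<in>T3 n. P \<subseteq> T})"
    by (rule finite_subset[OF _ finite_T3]) blast
  have "card {T\<in>T3 n. \<exists>X\<in>H. 2 \<le> card (X \<inter> T)} \<le> card (\<Union>X\<in>H. \<Union>P\<in>sub2 X. {T\<in>T3 n. P \<subseteq> T})"
    by (rule card_mono[OF fin sub])
  also have "\<dots> \<le> (\<Sum>X\<in>H. card (\<Union>P\<in>sub2 X. {T\<in>T3 n. P \<subseteq> T}))"
    by (rule card_UN_le[OF fH])
  also have "\<dots> \<le> (\<Sum>X\<in>H. 3 * n)"
  proof (rule sum_mono)
    fix X assume X: "X \<in> H"
    have cX: "card X = 3" using X HT unfolding T3_def by blast
    have fX: "finite X" using cX by (intro card_ge_0_finite) simp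
    have fs: "finite (sub2 X)" unfolding sub2_def using fX by simp
    have "card (\<Union>P\<in>sub2 X. {T\<in>T3 n. P \<subseteq> T}) \<le> (\<Sum>P\<in>sub2 X. card {T\<in>T3 n. P \<subseteq> T})"
      by (rule card_UN_le[OF fs])
    also have "\<dots> \<le> (\<Sum>P\<in>sub2 X. n)"
      by (rule sum_mono) (rule pairs_card, simp add: sub2_def)
    also have "\<dots> = 3 * n" using card_sub2_3[OF cX] by simp
    finally show "card (\<Union>P\<in>sub2 X. {T\<in>T3 n. P \<subseteq> T}) \<le> 3 * n" .
  qed
  also have "\<dots> = 3 * card H * n" by simp
  finally show ?thesis .
qed

lemma addT_card:
  assumes "H \<in> Lin n"
  shows "(n choose 3) - 3 * card H * n \<le> card (addT n H)"
proof -
  have HT: "H \<subseteq> T3 n" using assms unfolding Lin_def by simp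
  have fH: "finite H" by (rule finite_subset[OF HT finite_T3])
  let ?B = "{T\<in>T3 n. \<exists>X\<in>H. 2 \<le> card (X \<inter> T)}"
  have "addT n H = T3 n - ?B" unfolding addT_def by force
  moreover have "card (T3 n) - card ?B \<le> card (T3 n - ?B)"
    by (rule diff_card_le_card_Diff) (rule finite_subset[OF _ finite_T3], blast)
  ultimately have "card (T3 n) - card ?B \<le> card (addT n H)" by simp
  moreover have "card ?B \<le> 3 * card H * n" by (rule blocked_card[OF HT fH])
  ultimately show ?thesis using card_T3[of n] by linarith
qed

lemma layer_step:
  "card (Lk n k) * ((n choose 3) - 3 * k * n) \<le> card (Lk n (Suc k)) * Suc k"
proof -
  have fL: "finite (Lk n j)" for j unfolding Lk_def by (rule finite_subset[OF _ finite_Lin]) blast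
  let ?R = "\<lambda>H H'. \<exists>T\<in>addT n H. H' = insert T H"
  have "(\<Sum>H\<in>Lk n k. (n choose 3) - 3 * k * n) \<le> card (Lk n (Suc k)) * Suc k"
  proof (rule double_count_le[OF fL fL, where R = ?R])
    fix H assume H: "H \<in> Lk n k"
    have HL: "H \<in> Lin n" and cH: "card H = k" using H unfolding Lk_def by auto
    have HT: "H \<subseteq> T3 n" and lH: "lin H" using HL unfolding Lin_def by auto
    have fH: "finite H" by (rule finite_subset[OF HT finite_T3])
    have notin: "T \<notin> H" if T: "T \<in> addT n H" for T
    proof
      assume TH: "T \<in> H"
      have "card (T \<inter> T) \<le> 1" using T TH unfolding addT_def by blast
      moreover have "card T = 3" using T unfolding addT_def T3_def by blast
      ultimately show False by simp
    qed
    have img: "(\<lambda>T. insert T H) ` addT n H \<subseteq> {H'\<in>Lk n (Suc k). ?R H H'}"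
    proof
      fix H' assume "H' \<in> (\<lambda>T. insert T H) ` addT n H"
      then obtain T where T: "T \<in> addT n H" "H' = insert T H" by blast
      have TT: "T \<in> T3 n" using T unfolding addT_def by blast
      have "lin (insert T H)" unfolding lin_def
      proof (intro ballI impI)
        fix X Y assume X: "X \<in> insert T H" and Y: "Y \<in> insert T H" and XY: "X \<noteq> Y"
        show "card (X \<inter> Y) \<le> 1"
        proof (cases "X = T")
          case True
          hence "Y \<in> H" using Y XY by blast
          hence "card (Y \<inter> T) \<le> 1" using T(1) unfolding addT_def by blast
          thus ?thesis using True by (simp add: Int_commute)
        next
          case False
          hence XH: "X \<in> H" using X by blast
          show ?thesis
          proof (cases "Y = T")
            case True
            thus ?thesis using XH T(1) unfolding addT_def by blast
          next
            case False
            hence YH: "Y \<in> H" using Y by blast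
            show ?thesis by (rule linD[OF lH XH YH XY])
          qed
        qed
      qed
      moreover have "insert T H \<subseteq> T3 n" using HT TT by blast
      moreover have "card (insert T H) = Suc k" using notin[OF T(1)] fH cH by simp
      ultimately have "H' \<in> Lk n (Suc k)" unfolding Lk_def Lin_def using T(2) by simp
      thus "H' \<in> {H'\<in>Lk n (Suc k). ?R H H'}" using T by blast
    qed
    have inj: "inj_on (\<lambda>T. insert T H) (addT n H)"
    proof (rule inj_onI)
      fix T1 T2 assume T1: "T1 \<in> addT n H" and T2: "T2 \<in> addT n H" and e: "insert T1 H = insert T2 H"
      have "T1 \<in> insert T2 H" using e by blast
      thus "T1 = T2" using notin[OF T1] by blast
    qed
    have "(n choose 3) - 3 * k * n \<le> card (addT n H)" using addT_card[OF HL] cH by simp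
    also have "\<dots> = card ((\<lambda>T. insert T H) ` addT n H)" by (rule card_image[OF inj, symmetric])
    also have "\<dots> \<le> card {H'\<in>Lk n (Suc k). ?R H H'}"
      by (rule card_mono[OF _ img]) (rule finite_subset[OF _ fL[of "Suc k"]], blast)
    finally show "(n choose 3) - 3 * k * n \<le> card {H'\<in>Lk n (Suc k). ?R H H'}" .
  next
    fix H' assume H': "H' \<in> Lk n (Suc k)"
    have fH': "finite H'" using H' unfolding Lk_def Lin_def by (auto intro: finite_subset[OF _ finite_T3])
    have cH': "card H' = Suc k" using H' unfolding Lk_def by simp
    have "{H\<in>Lk n k. ?R H H'} \<subseteq> (\<lambda>T. H' - {T}) ` H'"
    proof
      fix H assume H: "H \<in> {H\<in>Lk n k. ?R H H'}"
      then obtain T where T: "T \<in> addT n H" "H' = insert T H" by blast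
      have "T \<notin> H"
      proof
        assume TH: "T \<in> H"
        have "card (T \<inter> T) \<le> 1" using T TH unfolding addT_def by blast
        moreover have "card T = 3" using T unfolding addT_def T3_def by blast
        ultimately show False by simp
      qed
      hence "H = H' - {T}" using T(2) by blast
      moreover have "T \<in> H'" using T(2) by blast
      ultimately show "H \<in> (\<lambda>T. H' - {T}) ` H'" by blast
    qed
    hence "card {H\<in>Lk n k. ?R H H'} \<le> card ((\<lambda>T. H' - {T}) ` H')"
      by (rule card_mono[rotated]) (simp add: fH')
    also have "\<dots> \<le> card H'" by (rule card_image_le[OF fH'])
    finally show "card {H\<in>Lk n k. ?R H H'} \<le> Suc k" using cH' by simp
  qed
  thus ?thesis by simp
qed



lemma layer_double:
  assumes "3 * k * n + 2 * Suc k \<le> (n choose 3)"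
  shows "2 * card (Lk n k) \<le> card (Lk n (Suc k))"
proof -
  have "card (Lk n k) * (2 * Suc k) \<le> card (Lk n k) * ((n choose 3) - 3 * k * n)"
    using assms by (intro mult_le_mono2) linarith
  also have "\<dots> \<le> card (Lk n (Suc k)) * Suc k" by (rule layer_step)
  finally have "(2 * card (Lk n k)) * Suc k \<le> card (Lk n (Suc k)) * Suc k" by (simp add: ac_simps)
  thus ?thesis by (metis mult_le_cancel2 zero_less_Suc)
qed

lemma sum_layers:
  assumes "\<forall>k<m. 2 * card (Lk n k) \<le> card (Lk n (Suc k))"
  shows "j \<le> m \<Longrightarrow> (\<Sum>k<j. card (Lk n k)) \<le> card (Lk n j)"
proof (induction j)
  case 0 thus ?case by simp
next
  case (Suc j)
  hence "(\<Sum>k<j. card (Lk n k)) \<le> card (Lk n j)" by simp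
  moreover have "2 * card (Lk n j) \<le> card (Lk n (Suc j))" using assms Suc.prems by simp
  ultimately show ?case by simp
qed

lemma finite_Lk: "finite (Lk n k)"
  unfolding Lk_def by (rule finite_subset[OF _ finite_Lin]) blast

lemma small_le_big:
  assumes "\<forall>k<m. 2 * card (Lk n k) \<le> card (Lk n (Suc k))"
  shows "card {H\<in>Lin n. card H < m} \<le> card {H\<in>Lin n. m \<le> card H}"
proof -
  have eq: "{H\<in>Lin n. card H < m} = (\<Union>k\<in>{..<m}. Lk n k)" unfolding Lk_def by blast
  have "card (\<Union>k\<in>{..<m}. Lk n k) = (\<Sum>k<m. card (Lk n k))"
    by (rule card_UN_disjoint) (simp, simp add: finite_Lk, auto simp: Lk_def)
  also have "\<dots> \<le> card (Lk n m)" by (rule sum_layers[OF assms]) simp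
  also have "\<dots> \<le> card {H\<in>Lin n. m \<le> card H}"
    by (rule card_mono) (auto simp: Lk_def finite_Lin)
  finally show ?thesis using eq by simp
qed

lemma avg_size:
  assumes "\<forall>k<m. 2 * card (Lk n k) \<le> card (Lk n (Suc k))"
  shows "m * card (Lin n) \<le> 2 * (\<Sum>H\<in>Lin n. card H)"
proof -
  let ?S = "{H\<in>Lin n. card H < m}" and ?B = "{H\<in>Lin n. m \<le> card H}"
  have fS: "finite ?S" "finite ?B" using finite_Lin by auto
  have "Lin n = ?S \<union> ?B" by auto
  hence "card (Lin n) = card ?S + card ?B" using card_Un_disjoint[OF fS] by (metis (no_types, lifting) disjoint_iff_not_equal mem_Collect_eq not_le)
  hence c: "card (Lin n) \<le> 2 * card ?B" using small_le_big[OF assms] by simp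
  have "m * card ?B = (\<Sum>H\<in>?B. m)" by simp
  also have "\<dots> \<le> (\<Sum>H\<in>?B. card H)" by (rule sum_mono) simp
  also have "\<dots> \<le> (\<Sum>H\<in>Lin n. card H)" by (rule sum_mono2[OF finite_Lin]) auto
  finally have "m * card ?B \<le> (\<Sum>H\<in>Lin n. card H)" .
  hence "m * (2 * card ?B) \<le> 2 * (\<Sum>H\<in>Lin n. card H)" by simp
  moreover have "m * card (Lin n) \<le> m * (2 * card ?B)" using c by simp
  ultimately show ?thesis by linarith
qed

lemma choose3_lower: assumes True: "3 \<le> n" shows "n ^ 3 \<le> 27 * (n choose 3)"
proof -
  have "(real n / real 3) ^ 3 \<le> real (n choose 3)" by (rule binomial_ge_n_over_k_pow_k[OF True])
  hence "real n ^ 3 \<le> 27 * real (n choose 3)" by (simp add: power_divide)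
  hence "real (n ^ 3) \<le> real (27 * (n choose 3))" by simp
  thus ?thesis by (simp only: of_nat_le_iff)
qed

lemma arith_aux: "(a::nat) \<ge> 5 * b \<Longrightarrow> b \<ge> 25 \<Longrightarrow> 27 * (3 * a + 2 * b + 400) \<le> 200 * a"
proof -
  assume h: "a \<ge> 5 * b" "b \<ge> 25"
  have 1: "54 * b \<le> 11 * a" using h(1) by linarith
  have 2: "10800 \<le> 87 * a" using h by linarith
  have "27 * (3 * a + 2 * b + 400) = 81 * a + 54 * b + 10800" by simp
  also have "\<dots> \<le> 200 * a" using 1 2 by linarith
  finally show ?thesis .
qed

lemma cond_m:
  assumes n: "5 \<le> n" and k: "k < n * n div 200"
  shows "3 * k * n + 2 * Suc k \<le> (n choose 3)"
proof -
  have k2: "200 * k \<le> n * n" using k by linarith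
  have h1: "200 * k * n \<le> n * n * n" using mult_le_mono1[OF k2] by simp
  have b25: "25 \<le> n * n" using mult_le_mono[OF n n] by simp
  have a5: "5 * (n * n) \<le> n * n * n" using mult_le_mono1[OF n, of "n*n"] by (simp add: ac_simps)
  have c: "n * n * n \<le> 27 * (n choose 3)" using choose3_lower[of n] n by (simp add: power3_eq_cube)
  have "200 * (3 * k * n + 2 * Suc k) = 3 * (200 * k * n) + 2 * (200 * k) + 400" by simp
  also have "\<dots> \<le> 3 * (n*n*n) + 2 * (n*n) + 400" using h1 k2 by linarith
  finally have "27 * (200 * (3 * k * n + 2 * Suc k)) \<le> 27 * (3 * (n*n*n) + 2 * (n*n) + 400)" by simp
  also have "\<dots> \<le> 200 * (n*n*n)" by (rule arith_aux[OF a5 b25])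
  also have "\<dots> \<le> 200 * (27 * (n choose 3))" using c by simp
  finally show ?thesis by simp
qed

lemma avg_final:
  assumes "5 \<le> n"
  shows "(n * n div 200) * card (Lin n) \<le> 2 * (\<Sum>H\<in>Lin n. card H)"
  by (rule avg_size) (use cond_m[OF assms] layer_double in blast)



definition Cand :: "nat \<Rightarrow> nat set \<Rightarrow> nat set set" where
  "Cand n L = {Y\<in>T3 n. card (Y \<inter> L) = 2}"

lemma choose_le_pow': "(c choose j) \<le> c ^ j"
proof (cases "j \<le> c")
  case True thus ?thesis by (rule binomial_le_pow)
next
  case False thus ?thesis by (simp add: binomial_eq_0)
qed

lemma card_small_subsets:
  assumes fC: "finite C"
  shows "card {D. D \<subseteq> C \<and> card D \<le> 3} \<le> (card C + 1) ^ 3"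
proof -
  have eq: "{D. D \<subseteq> C \<and> card D \<le> 3} = (\<Union>j\<in>{..3::nat}. {D. D \<subseteq> C \<and> card D = j})" by auto
  have "card (\<Union>j\<in>{..3::nat}. {D. D \<subseteq> C \<and> card D = j}) \<le> (\<Sum>j\<in>{..3::nat}. card {D. D \<subseteq> C \<and> card D = j})"
    by (rule card_UN_le) simp
  also have "\<dots> = (\<Sum>j\<in>{..3::nat}. card C choose j)" using n_subsets[OF fC] by simp
  also have "\<dots> \<le> (\<Sum>j\<in>{..3::nat}. card C ^ j)" by (rule sum_mono) (rule choose_le_pow')
  also have "\<dots> \<le> (card C + 1) ^ 3"
    by (simp add: numeral_eq_Suc algebra_simps power_Suc)
  finally show ?thesis using eq by simp
qed

lemma card_Cand:
  assumes cL: "card L = 4" shows "card (Cand n L) \<le> 6 * n"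
proof -
  have fL: "finite L" using cL by (intro card_ge_0_finite) simp
  have fs: "finite (sub2 L)" unfolding sub2_def using fL by simp
  have sub: "Cand n L \<subseteq> (\<Union>P\<in>sub2 L. {T\<in>T3 n. P \<subseteq> T})"
  proof
    fix Y assume Y: "Y \<in> Cand n L"
    hence "Y \<inter> L \<in> sub2 L" "Y \<inter> L \<subseteq> Y" "Y \<in> T3 n" unfolding Cand_def sub2_def by auto
    thus "Y \<in> (\<Union>P\<in>sub2 L. {T\<in>T3 n. P \<subseteq> T})" by blast
  qed
  have "card (Cand n L) \<le> card (\<Union>P\<in>sub2 L. {T\<in>T3 n. P \<subseteq> T})"
    by (rule card_mono[OF _ sub]) (rule finite_subset[OF _ finite_T3], blast)
  also have "\<dots> \<le> (\<Sum>P\<in>sub2 L. card {T\<in>T3 n. P \<subseteq> T})" by (rule card_UN_le[OF fs])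
  also have "\<dots> \<le> (\<Sum>P\<in>sub2 L. n)" by (rule sum_mono) (rule pairs_card, simp add: sub2_def)
  also have "\<dots> = 6 * n" using card_sub2_4[OF cL] by simp
  finally show ?thesis .
qed

definition Rel :: "nat \<Rightarrow> nat set set \<Rightarrow> nat set set \<Rightarrow> bool" where
  "Rel n H G \<longleftrightarrow> (\<exists>T\<in>H. \<exists>x\<in>{1..n} - T. G = con H (insert x T))"

lemma T3_props: "T \<in> T3 n \<Longrightarrow> finite T \<and> card T = 3 \<and> T \<subseteq> {1..n}"
  using T3_finite_mem[of T n] unfolding T3_def by simp

lemma card_ins4: "T \<in> T3 n \<Longrightarrow> x \<notin> T \<Longrightarrow> card (insert x T) = 4"
  using T3_props[of T n] by simp

lemma out_deg:
  assumes HL: "H \<in> Lin n"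
  shows "card H * (n - 3) \<le> card {G\<in>Q n. Rel n H G}"
proof -
  have HT: "H \<subseteq> T3 n" and lH: "lin H" using HL unfolding Lin_def by auto
  have fH: "finite H" by (rule finite_subset[OF HT finite_T3])
  let ?S = "SIGMA T:H. {1..n} - T"
  let ?f = "\<lambda>(T, x). con H (insert x T)"
  have cS: "card ?S = card H * (n - 3)"
  proof -
    have "card ?S = (\<Sum>T\<in>H. card ({1..n} - T))" by (rule card_SigmaI) (simp_all add: fH)
    also have "\<dots> = (\<Sum>T\<in>H. n - 3)"
    proof (rule sum.cong[OF refl])
      fix T assume "T \<in> H"
      hence p: "finite T \<and> card T = 3 \<and> T \<subseteq> {1..n}" using HT T3_props by blast
      thus "card ({1..n} - T) = n - 3" using card_Diff_subset[of T "{1..n}"] by simp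
    qed
    finally show ?thesis by simp
  qed
  have img: "?f ` ?S \<subseteq> {G\<in>Q n. Rel n H G}"
  proof
    fix G assume "G \<in> ?f ` ?S"
    then obtain T x where Tx: "T \<in> H" "x \<in> {1..n} - T" "G = con H (insert x T)" by auto
    have "G \<in> Q n" unfolding Q_def using Tx HL by blast
    moreover have "Rel n H G" unfolding Rel_def using Tx by blast
    ultimately show "G \<in> {G\<in>Q n. Rel n H G}" by simp
  qed
  have inj: "inj_on ?f ?S"
  proof (rule inj_onI)
    fix p1 p2 assume p1: "p1 \<in> ?S" and p2: "p2 \<in> ?S" and e: "?f p1 = ?f p2"
    obtain T1 x1 where q1: "p1 = (T1, x1)" "T1 \<in> H" "x1 \<in> {1..n} - T1" using p1 by auto
    obtain T2 x2 where q2: "p2 = (T2, x2)" "T2 \<in> H" "x2 \<in> {1..n} - T2" using p2 by auto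
    have e2: "con H (insert x1 T1) = con H (insert x2 T2)" using e q1 q2 by simp
    have T1T: "T1 \<in> T3 n" and T2T: "T2 \<in> T3 n" using q1 q2 HT by auto
    have c1: "card (insert x1 T1) = 4" using card_ins4[OF T1T] q1 by simp
    have mem: "insert x1 T1 \<in> con H (insert x1 T1)" unfolding con_def by simp
    have "insert x1 T1 \<in> con H (insert x2 T2)" using mem e2 by simp
    hence "insert x1 T1 = insert x2 T2 \<or> insert x1 T1 \<in> H" unfolding con_def by blast
    moreover have "insert x1 T1 \<notin> H"
    proof
      assume "insert x1 T1 \<in> H"
      hence "card (insert x1 T1) = 3" using HT T3_props by blast
      thus False using c1 by simp
    qed
    ultimately have L: "insert x1 T1 = insert x2 T2" by blast
    have p1': "finite T1 \<and> card T1 = 3" using T3_props[OF T1T] by simp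
    have p2': "finite T2 \<and> card T2 = 3" using T3_props[OF T2T] by simp
    have TT: "T1 = T2"
    proof (rule ccontr)
      assume ne: "T1 \<noteq> T2"
      have i: "card (T1 \<inter> T2) \<le> 1" by (rule linD[OF lH q1(2) q2(2) ne])
      have "T1 \<union> T2 \<subseteq> insert x1 T1" using L by blast
      hence "card (T1 \<union> T2) \<le> card (insert x1 T1)" using p1' by (intro card_mono) auto
      hence u: "card (T1 \<union> T2) \<le> 4" using c1 by simp
      have "card (T1 \<union> T2) + card (T1 \<inter> T2) = card T1 + card T2"
        using card_Un_Int[of T1 T2] p1' p2' by simp
      thus False using i u p1' p2' by simp
    qed
    have "x1 \<in> insert x2 T2" using L by blast
    hence "x1 = x2" using q1(3) TT by blast
    thus "p1 = p2" using q1 q2 TT by simp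
  qed
  have fin: "finite {G\<in>Q n. Rel n H G}" using finite_Q by simp
  have "card ?S = card (?f ` ?S)" by (rule card_image[OF inj, symmetric])
  also have "\<dots> \<le> card {G\<in>Q n. Rel n H G}" by (rule card_mono[OF fin img])
  finally show ?thesis using cS by simp
qed



lemma card_sub3_4: "card L = 4 \<Longrightarrow> card (sub3 L) = 4"
proof -
  assume c: "card L = 4"
  hence "finite L" by (intro card_ge_0_finite) simp
  thus ?thesis unfolding sub3_def using n_subsets[of L 3] c by (simp add: numeral_eq_Suc)
qed

lemma in_deg_struct:
  assumes HL: "H \<in> Lin n" and T: "T \<in> H" and x: "x \<in> {1..n} - T"
  defines "L \<equiv> insert x T"
  defines "D \<equiv> {Y\<in>H. card (Y \<inter> L) = 2}"
  shows "H = insert T ((con H L - {L}) \<union> D)" and "D \<subseteq> Cand n L" and "card D \<le> 3"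
    and "T \<in> sub3 L"
proof -
  have HT: "H \<subseteq> T3 n" and lH: "lin H" using HL unfolding Lin_def by auto
  have TT: "T \<in> T3 n" using T HT by blast
  have pT: "finite T \<and> card T = 3 \<and> T \<subseteq> {1..n}" by (rule T3_props[OF TT])
  have xT: "x \<notin> T" using x by simp
  have cL: "card L = 4" unfolding L_def using card_ins4[OF TT xT] .
  have fL: "finite L" unfolding L_def using pT by simp
  have LnH: "L \<notin> H"
  proof
    assume "L \<in> H" hence "card L = 3" using HT T3_props by blast
    thus False using cL by simp
  qed
  have sLY: "Y \<inter> L \<subseteq> insert x (Y \<inter> T)" for Y unfolding L_def by blast
  have le2: "card (Y \<inter> L) \<le> Suc (card (Y \<inter> T))" for Y
  proof -
    have "card (Y \<inter> L) \<le> card (insert x (Y \<inter> T))" by (rule card_mono[OF _ sLY]) (simp add: pT)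
    also have "\<dots> \<le> Suc (card (Y \<inter> T))" by (rule card_insert_le_m1) simp_all
    finally show ?thesis .
  qed
  have cTL: "card (T \<inter> L) = 3" unfolding L_def using pT by (simp add: Int_absorb2 subset_insertI)
  show "T \<in> sub3 L" unfolding sub3_def L_def using pT by blast
  show "H = insert T ((con H L - {L}) \<union> D)"
  proof (intro set_eqI iffI)
    fix Y assume Y: "Y \<in> H"
    show "Y \<in> insert T ((con H L - {L}) \<union> D)"
    proof (cases "Y = T")
      case True thus ?thesis by simp
    next
      case False
      have "card (Y \<inter> T) \<le> 1" by (rule linD[OF lH Y T False])
      hence "card (Y \<inter> L) \<le> 2" using le2[of Y] by simp
      hence "card (Y \<inter> L) \<le> 1 \<or> card (Y \<inter> L) = 2" by linarith
      thus ?thesis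
      proof
        assume "card (Y \<inter> L) \<le> 1"
        hence "Y \<in> con H L" using Y unfolding con_def by simp
        moreover have "Y \<noteq> L" using Y LnH by blast
        ultimately show ?thesis by simp
      next
        assume "card (Y \<inter> L) = 2" thus ?thesis using Y unfolding D_def by simp
      qed
    qed
  next
    fix Y assume Y: "Y \<in> insert T ((con H L - {L}) \<union> D)"
    thus "Y \<in> H" using T unfolding con_def D_def by auto
  qed
  show "D \<subseteq> Cand n L" unfolding D_def Cand_def using HT by blast
  have props: "x \<in> Y \<and> card (Y \<inter> T) = 1" if Y: "Y \<in> D" for Y
  proof -
    have YH: "Y \<in> H" and cY: "card (Y \<inter> L) = 2" using Y unfolding D_def by auto
    have "Y \<noteq> T" using cY cTL by auto
    hence c1: "card (Y \<inter> T) \<le> 1" by (rule linD[OF lH YH T])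
    have c2: "1 \<le> card (Y \<inter> T)" using le2[of Y] cY by simp
    have "x \<in> Y"
    proof (rule ccontr)
      assume "x \<notin> Y"
      hence "Y \<inter> L \<subseteq> Y \<inter> T" unfolding L_def by blast
      hence "card (Y \<inter> L) \<le> card (Y \<inter> T)" by (rule card_mono[rotated]) (simp add: pT)
      thus False using cY c1 by simp
    qed
    thus ?thesis using c1 c2 by simp
  qed
  have inj: "inj_on (\<lambda>Y. Y \<inter> T) D"
  proof (rule inj_onI)
    fix Y1 Y2 assume Y1: "Y1 \<in> D" and Y2: "Y2 \<in> D" and e: "Y1 \<inter> T = Y2 \<inter> T"
    show "Y1 = Y2"
    proof (rule ccontr)
      assume ne: "Y1 \<noteq> Y2"
      have H1: "Y1 \<in> H" and H2: "Y2 \<in> H" using Y1 Y2 unfolding D_def by auto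
      have i: "card (Y1 \<inter> Y2) \<le> 1" by (rule linD[OF lH H1 H2 ne])
      have p1: "x \<in> Y1" "card (Y1 \<inter> T) = 1" using props[OF Y1] by auto
      have p2: "x \<in> Y2" using props[OF Y2] by auto
      have sub: "insert x (Y1 \<inter> T) \<subseteq> Y1 \<inter> Y2" using p1 p2 e by blast
      have fY: "finite Y1" using H1 HT T3_props by blast
      have "card (insert x (Y1 \<inter> T)) = 2" using p1 xT pT by simp
      moreover have "card (insert x (Y1 \<inter> T)) \<le> card (Y1 \<inter> Y2)"
        by (rule card_mono[OF _ sub]) (simp add: fY)
      ultimately show False using i by simp
    qed
  qed
  have "(\<lambda>Y. Y \<inter> T) ` D \<subseteq> {S. S \<subseteq> T \<and> card S = 1}" using props by auto
  hence "card ((\<lambda>Y. Y \<inter> T) ` D) \<le> card {S. S \<subseteq> T \<and> card S = 1}"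
    by (rule card_mono[rotated]) (simp add: pT)
  also have "\<dots> = 3" using n_subsets[of T 1] pT by simp
  finally show "card D \<le> 3" using card_image[OF inj] by simp
qed

lemma in_deg:
  assumes GQ: "G \<in> Q n"
  shows "card {H\<in>Lin n. Rel n H G} \<le> 4 * (6 * n + 1) ^ 3"
proof -
  obtain L H' where LH: "G = insert L H'" "qstruct n L H'" using Q_struct[OF GQ] by blast
  have cL: "card L = 4" and H'T: "H' \<subseteq> T3 n" using LH unfolding qstruct_def by auto
  let ?Ds = "{D. D \<subseteq> Cand n L \<and> card D \<le> 3}"
  let ?g = "\<lambda>(T, D). insert T ((G - {L}) \<union> D)"
  have sub: "{H\<in>Lin n. Rel n H G} \<subseteq> ?g ` (sub3 L \<times> ?Ds)"
  proof
    fix H assume "H \<in> {H\<in>Lin n. Rel n H G}"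
    hence HL: "H \<in> Lin n" and "Rel n H G" by auto
    then obtain T x where T: "T \<in> H" and x: "x \<in> {1..n} - T" and G: "G = con H (insert x T)"
      unfolding Rel_def by blast
    have HT: "H \<subseteq> T3 n" using HL unfolding Lin_def by auto
    have TT: "T \<in> T3 n" using T HT by blast
    have c4: "card (insert x T) = 4" using card_ins4[OF TT] x by simp
    have "insert x T \<in> G" using G unfolding con_def by simp
    hence "insert x T = L \<or> insert x T \<in> H'" using LH(1) by simp
    moreover have "insert x T \<notin> H'"
    proof
      assume "insert x T \<in> H'" hence "card (insert x T) = 3" using H'T T3_props by blast
      thus False using c4 by simp
    qed
    ultimately have L: "insert x T = L" by blast
    note st = in_deg_struct[OF HL T x]
    let ?D = "{Y\<in>H. card (Y \<inter> insert x T) = 2}"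
    have "H = ?g (T, ?D)" using st(1) G L by simp
    moreover have "(T, ?D) \<in> sub3 L \<times> ?Ds" using st(2,3,4) L by simp
    ultimately show "H \<in> ?g ` (sub3 L \<times> ?Ds)" by blast
  qed
  have fC: "finite (Cand n L)" unfolding Cand_def using finite_T3 by simp
  have fDs: "finite ?Ds" by (rule finite_subset[of _ "Pow (Cand n L)"]) (auto simp: fC)
  have fs3: "finite (sub3 L)" unfolding sub3_def using cL by (simp add: card_ge_0_finite)
  have "card {H\<in>Lin n. Rel n H G} \<le> card (?g ` (sub3 L \<times> ?Ds))"
    by (rule card_mono[OF _ sub]) (simp add: fDs fs3)
  also have "\<dots> \<le> card (sub3 L \<times> ?Ds)" by (rule card_image_le) (simp add: fDs fs3)
  also have "\<dots> = 4 * card ?Ds" using card_sub3_4[OF cL] by (simp add: card_cartesian_product)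
  also have "\<dots> \<le> 4 * (card (Cand n L) + 1) ^ 3" using card_small_subsets[OF fC] by simp
  also have "\<dots> \<le> 4 * (6 * n + 1) ^ 3" using card_Cand[OF cL, of n] by (simp add: power_mono)
  finally show ?thesis .
qed

lemma Q_bound: "(\<Sum>H\<in>Lin n. card H * (n - 3)) \<le> card (Q n) * (4 * (6 * n + 1) ^ 3)"
  by (rule double_count_le[OF finite_Lin finite_Q, where R = "Rel n"]) (erule out_deg, erule in_deg)



lemma K_bound:
  assumes n: "1000 \<le> (n::nat)"
  shows "8 * (6 * n + 1) ^ 3 \<le> 10^7 * ((n - 3) * (n * n div 200))"
proof -
  define m where "m = n * n div 200"
  define k where "k = n - 3"
  have "n * n = 200 * m + n * n mod 200" unfolding m_def by simp
  moreover have "n * n mod 200 < 200" by simp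
  ultimately have q1: "n * n \<le> 200 * m + 199" by linarith
  have "1000 * 1000 \<le> n * n" using mult_le_mono[OF n n] .
  hence q2: "n * n \<le> 400 * m" using q1 by linarith
  have q3: "n \<le> 2 * k" using n unfolding k_def by linarith
  have "n * (n * n) \<le> (2 * k) * (400 * m)" by (rule mult_le_mono[OF q3 q2])
  hence q4: "n * (n * n) \<le> 800 * (k * m)" by (simp add: ac_simps)
  have "6 * n + 1 \<le> 7 * n" using n by linarith
  hence "(6 * n + 1) ^ 3 \<le> (7 * n) ^ 3" by (rule power_mono) simp
  also have "\<dots> = 343 * (n * (n * n))" by (simp add: power3_eq_cube)
  finally have "8 * (6 * n + 1) ^ 3 \<le> 2744 * (n * (n * n))" by simp
  also have "\<dots> \<le> 2744 * (800 * (k * m))" using q4 by simp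
  also have "\<dots> \<le> 10^7 * (k * m)" by simp
  finally show ?thesis unfolding m_def k_def .
qed

lemma Lin_le_Q:
  assumes n: "1000 \<le> n"
  shows "card (Lin n) \<le> 10^7 * card (Q n)"
proof -
  define m where "m = n * n div 200"
  define K where "K = 8 * (6 * n + 1) ^ 3"
  define S where "S = (\<Sum>H\<in>Lin n. card H)"
  have a: "m * card (Lin n) \<le> 2 * S" unfolding m_def S_def by (rule avg_final) (use n in simp)
  have b: "S * (n - 3) \<le> card (Q n) * (4 * (6 * n + 1) ^ 3)"
    using Q_bound[of n] unfolding S_def by (simp add: sum_distrib_right)
  have "(m * card (Lin n)) * (n - 3) \<le> (2 * S) * (n - 3)" by (rule mult_le_mono1[OF a])
  also have "\<dots> \<le> 2 * (card (Q n) * (4 * (6 * n + 1) ^ 3))" using b by simp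
  also have "\<dots> = K * card (Q n)" unfolding K_def by simp
  finally have c: "((n - 3) * m) * card (Lin n) \<le> K * card (Q n)" by (simp add: ac_simps)
  have d: "K \<le> 10^7 * ((n - 3) * m)" unfolding K_def m_def by (rule K_bound[OF n])
  have "K * card (Lin n) \<le> (10^7 * ((n - 3) * m)) * card (Lin n)" by (rule mult_le_mono1[OF d])
  also have "\<dots> = 10^7 * (((n - 3) * m) * card (Lin n))" by simp
  also have "\<dots> \<le> 10^7 * (K * card (Q n))" using c by simp
  finally have "K * card (Lin n) \<le> K * (10^7 * card (Q n))" by (simp add: ac_simps)
  moreover have "0 < K" unfolding K_def by simp
  ultimately show ?thesis by simp
qed

lemma ratio_bound:
  assumes n: "1000 \<le> n"
  shows "1 + 1 / 10^7 \<le> real (p_count n 3) / real (s_count n 3)"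
proof -
  have n5: "5 \<le> n" using n by simp
  have p: "card (Lin n) + card (Q n) \<le> p_count n 3" by (rule p_ge[OF n5])
  have s: "s_count n 3 \<le> card (Lin n)" by (rule s_le)
  have s1: "1 \<le> s_count n 3" by (rule s_pos[OF n5])
  have lq: "card (Lin n) \<le> 10^7 * card (Q n)" by (rule Lin_le_Q[OF n])
  have rl: "real (card (Lin n)) / 10^7 \<le> real (card (Q n))" using lq by simp
  have "(1 + 1 / 10^7) * real (s_count n 3) \<le> (1 + 1 / 10^7) * real (card (Lin n))"
    using s by simp
  also have "\<dots> = real (card (Lin n)) + real (card (Lin n)) / 10^7" by (simp add: algebra_simps)
  also have "\<dots> \<le> real (card (Lin n)) + real (card (Q n))" using rl by simp
  also have "\<dots> \<le> real (p_count n 3)" using p by linarith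
  finally have "(1 + 1 / 10^7) * real (s_count n 3) \<le> real (p_count n 3)" .
  moreover have "0 < real (s_count n 3)" using s1 by simp
  ultimately show ?thesis by (simp add: pos_le_divide_eq)
qed

theorem theorem1p6:
  shows "liminf (\<lambda>n. ereal (real (p_count n 3) / real (s_count n 3))) > 1"
proof -
  have ev: "\<forall>\<^sub>F n in sequentially. ereal (1 + 1 / 10^7) \<le> ereal (real (p_count n 3) / real (s_count n 3))"
    unfolding eventually_sequentially using ratio_bound by auto
  have A: "ereal (1 + 1 / 10^7) \<le> liminf (\<lambda>n. ereal (real (p_count n 3) / real (s_count n 3)))"
    by (rule Liminf_bounded[OF ev])
  have B: "(1::ereal) < ereal (1 + 1 / 10^7)" by simp
  show ?thesis by (rule less_le_trans[OF B A])
qed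


end
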